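(* Let $r>0$, $\mathbf{c}=(c_1,c_2,\dots,c_n)\in\mathbb{R}^n_{\ge0}$ and $\mathbf{c}'=(c_1,0,\dots,0)$. Then $$\mathrm{Vol}\big(C(\mathbf{0},1)\cap C(\mathbf{c},r)\big)\le \mathrm{Vol}\big(C(\mathbf{0},1)\cap C(\mathbf{c}',r)\big).$$
   Context: For $\mathbf{c}\in\mathbb{R}^n$, $r\ge 0$, $C(\mathbf{c},r)=\{\mathbf{x}\in\mathbb{R}^n:\|\mathbf{x}-\mathbf{c}\|_1\le r\}$. *)

theory Defs
  imports "HOL-Analysis.Analysis"
begin

definition cross_polytope :: "real ^ 'n \<Rightarrow> real \<Rightarrow> (real ^ 'n) set" where
  "cross_polytope c r = {x. (\<Sum>i\<in>UNIV. \<bar>x $ i - c $ i\<bar>) \<le> r}"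

end

theory Submission imports Defs begin

lemma slice_mono:
  fixes S T :: "'a::euclidean_space set" and e :: 'a
  assumes e: "e \<in> Basis" and S: "S \<in> sets borel" and T: "T \<in> sets borel"
    and le: "\<And>v. emeasure lborel {t. v + t *\<^sub>R e \<in> S} \<le> emeasure lborel {t. v + t *\<^sub>R e \<in> T}"
  shows "emeasure lborel S \<le> emeasure lborel T"
proof -
  interpret P: product_sigma_finite "\<lambda>_::'a. lborel::real measure"
    by standard
  have B: "Basis = insert e (Basis - {e})" using e by auto
  have fin: "finite (Basis - {e})" "e \<notin> Basis - {e}" by auto
  have sm: "(\<lambda>f. \<Sum>b\<in>Basis. f b *\<^sub>R b) \<in> borel_measurable (\<Pi>\<^sub>M b\<in>Basis. (lborel::real measure))"
    by measurable
  have gen: "emeasure lborel X = (\<integral>\<^sup>+ g. emeasure lborel {t. (\<Sum>b\<in>Basis - {e}. g b *\<^sub>R b) + t *\<^sub>R e \<in> X} \<partial>(\<Pi>\<^sub>M b\<in>Basis - {e}. lborel))"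
    if X: "X \<in> sets borel" for X
  proof -
    have "emeasure lborel X = (\<integral>\<^sup>+ x. indicator X x \<partial>lborel)"
      using X by simp
    also have "\<dots> = (\<integral>\<^sup>+ f. indicator X (\<Sum>b\<in>Basis. f b *\<^sub>R b) \<partial>(\<Pi>\<^sub>M b\<in>Basis. lborel))"
      by (subst lborel_eq) (rule nn_integral_distr[OF sm], rule borel_measurable_indicator, simp add: X)
    also have "\<dots> = (\<integral>\<^sup>+ f. indicator X (\<Sum>b\<in>Basis. f b *\<^sub>R b) \<partial>(\<Pi>\<^sub>M b\<in>insert e (Basis - {e}). lborel))"
      using e by (simp add: insert_absorb)
    also have "\<dots> = (\<integral>\<^sup>+ g. (\<integral>\<^sup>+ y. indicator X (\<Sum>b\<in>Basis. (g(e:=y)) b *\<^sub>R b) \<partial>lborel) \<partial>(\<Pi>\<^sub>M b\<in>Basis - {e}. lborel))"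
      apply (rule P.product_nn_integral_insert[OF fin])
      using measurable_compose[OF sm borel_measurable_indicator[OF X]] e by (simp add: insert_absorb)
    also have "\<dots> = (\<integral>\<^sup>+ g. emeasure lborel {t. (\<Sum>b\<in>Basis - {e}. g b *\<^sub>R b) + t *\<^sub>R e \<in> X} \<partial>(\<Pi>\<^sub>M b\<in>Basis - {e}. lborel))"
    proof (rule nn_integral_cong)
      fix g
      have eq: "(\<Sum>b\<in>Basis. (g(e:=y)) b *\<^sub>R b) = (\<Sum>b\<in>Basis - {e}. g b *\<^sub>R b) + y *\<^sub>R e" for y
        using e by (simp add: sum.remove[of Basis e])
      have ms: "{t. (\<Sum>b\<in>Basis - {e}. g b *\<^sub>R b) + t *\<^sub>R e \<in> X} \<in> sets lborel"
        using X by measurable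
      show "(\<integral>\<^sup>+ y. indicator X (\<Sum>b\<in>Basis. (g(e:=y)) b *\<^sub>R b) \<partial>lborel) = emeasure lborel {t. (\<Sum>b\<in>Basis - {e}. g b *\<^sub>R b) + t *\<^sub>R e \<in> X}"
        unfolding eq using nn_integral_indicator[OF ms]
        by (simp add: indicator_def)
    qed
    finally show ?thesis .
  qed
  show ?thesis
    unfolding gen[OF S] gen[OF T] by (rule nn_integral_mono, rule le)
qed

lemma oneD:
  fixes p q a b :: real
  shows "emeasure lborel {t. \<bar>t + p\<bar> \<le> a \<and> \<bar>t + q\<bar> \<le> b}
       \<le> emeasure lborel {t. \<bar>t + p\<bar> \<le> a \<and> \<bar>t + p\<bar> \<le> b}"
proof -
  have e1: "{t. \<bar>t + p\<bar> \<le> a \<and> \<bar>t + q\<bar> \<le> b} = {max (-a-p) (-b-q) .. min (a-p) (b-q)}"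
    by (auto simp: abs_le_iff)
  have e2: "{t. \<bar>t + p\<bar> \<le> a \<and> \<bar>t + p\<bar> \<le> b} = {-(min a b)-p .. min a b - p}"
    by (auto simp: abs_le_iff)
  show ?thesis unfolding e1 e2 emeasure_lborel_Icc_eq
    by (rule ennreal_leI) auto
qed

lemma coord_step:
  fixes c :: "real ^ 'n" and r :: real and j :: 'n
  shows "emeasure lborel (cross_polytope 0 1 \<inter> cross_polytope c r)
       \<le> emeasure lborel (cross_polytope 0 1 \<inter> cross_polytope (\<chi> i. if i = j then 0 else c $ i) r)"
proof (rule slice_mono[of "axis j (1::real)"])
  have cl: "closed (cross_polytope d s)" for d :: "real ^ 'n" and s
    unfolding cross_polytope_def
    by (intro closed_Collect_le continuous_intros)
  show "cross_polytope 0 1 \<inter> cross_polytope c r \<in> sets borel"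
    "cross_polytope 0 1 \<inter> cross_polytope (\<chi> i. if i = j then 0 else c $ i) r \<in> sets borel"
    using cl by (auto intro!: borel_closed closed_Int)
  show "axis j (1::real) \<in> Basis" by simp
  fix v :: "real ^ 'n"
  have sp: "(\<Sum>i\<in>UNIV. f i) = f j + (\<Sum>i\<in>UNIV-{j}. f i)" for f :: "'n \<Rightarrow> real"
    by (simp add: sum.remove)
  have cmp: "(v + t *\<^sub>R axis j 1) $ i = (if i = j then v $ i + t else v $ i)" for t i
    by (simp add: axis_def)
  have q1: "(\<Sum>i\<in>UNIV-{j}. \<bar>v$i + t * axis j 1 $ i\<bar>) = (\<Sum>i\<in>UNIV-{j}. \<bar>v$i\<bar>)" for t
    by (rule sum.cong) (auto simp: axis_def)
  have q2: "(\<Sum>i\<in>UNIV-{j}. \<bar>v$i + t * axis j 1 $ i - c $ i\<bar>) = (\<Sum>i\<in>UNIV-{j}. \<bar>v$i - c$i\<bar>)" for t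
    by (rule sum.cong) (auto simp: axis_def)
  have q3: "(\<Sum>i\<in>UNIV-{j}. \<bar>v$i + t * axis j 1 $ i - (if i = j then 0 else c $ i)\<bar>) = (\<Sum>i\<in>UNIV-{j}. \<bar>v$i - c$i\<bar>)" for t
    by (rule sum.cong) (auto simp: axis_def)
  let ?A = "1 - (\<Sum>i\<in>UNIV-{j}. \<bar>v $ i\<bar>)"
  let ?B = "r - (\<Sum>i\<in>UNIV-{j}. \<bar>v $ i - c $ i\<bar>)"
  have s1: "{t. v + t *\<^sub>R axis j 1 \<in> cross_polytope 0 1 \<inter> cross_polytope c r}
      = {t. \<bar>t + v $ j\<bar> \<le> ?A \<and> \<bar>t + (v $ j - c $ j)\<bar> \<le> ?B}"
    unfolding cross_polytope_def
    apply (subst (1 2) sp)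
    apply (simp add: cmp)
    apply (simp add: q1 q2 q3)
    apply (simp add: algebra_simps)
    done
  have s2: "{t. v + t *\<^sub>R axis j 1 \<in> cross_polytope 0 1 \<inter> cross_polytope (\<chi> i. if i = j then 0 else c $ i) r}
      = {t. \<bar>t + v $ j\<bar> \<le> ?A \<and> \<bar>t + v $ j\<bar> \<le> ?B}"
    unfolding cross_polytope_def
    apply (subst (1 2) sp)
    apply (simp add: cmp)
    apply (simp add: q1 q2 q3)
    apply (simp add: algebra_simps)
    done
  show "emeasure lborel {t. v + t *\<^sub>R axis j 1 \<in> cross_polytope 0 1 \<inter> cross_polytope c r}
     \<le> emeasure lborel {t. v + t *\<^sub>R axis j 1 \<in> cross_polytope 0 1 \<inter> cross_polytope (\<chi> i. if i = j then 0 else c $ i) r}"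
    unfolding s1 s2 by (rule oneD)
qed

lemma cp_borel: "cross_polytope 0 1 \<inter> cross_polytope (d::real^'n) s \<in> sets borel"
proof -
  have cl: "closed (cross_polytope d s)" for d :: "real ^ 'n" and s
    unfolding cross_polytope_def
    by (intro closed_Collect_le continuous_intros)
  show ?thesis using cl by (auto intro!: borel_closed closed_Int)
qed

lemma cp_bounded: "bounded (cross_polytope 0 1 \<inter> cross_polytope (d::real^'n) s)"
proof -
  have "cross_polytope 0 1 \<inter> cross_polytope d s \<subseteq> cball (0::real^'n) 1"
    unfolding cross_polytope_def
    by (auto simp: dist_norm intro: order_trans[OF norm_le_l1_cart])
  thus ?thesis by (rule bounded_subset[OF bounded_cball])
qed

lemma meas_eq: "measure lebesgue (cross_polytope 0 1 \<inter> cross_polytope (d::real^'n) s)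
   = enn2real (emeasure lborel (cross_polytope 0 1 \<inter> cross_polytope d s))"
  using cp_borel[of d s] by (simp add: measure_def)

theorem mainTheorem9:
  fixes c :: "real ^ 'n" and r :: real and k :: 'n
  assumes "r > 0"
    and "\<forall>i. c $ i \<ge> 0"
  shows "measure lebesgue (cross_polytope 0 1 \<inter> cross_polytope c r)
         \<le> measure lebesgue (cross_polytope 0 1 \<inter>
               cross_polytope (\<chi> i. if i = k then c $ k else 0) r)"
proof -
  define z where "z S = (\<chi> i. if i \<in> S then 0 else c $ i)" for S
  have "emeasure lborel (cross_polytope 0 1 \<inter> cross_polytope c r)
      \<le> emeasure lborel (cross_polytope 0 1 \<inter> cross_polytope (z S) r)" for S
  proof -
    have "finite S" by simp
    thus ?thesis
    proof (induction S rule: finite_induct)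
      case empty
      have "z {} = c" by (simp add: z_def vec_eq_iff)
      thus ?case by simp
    next
      case (insert j S)
      have "z (insert j S) = (\<chi> i. if i = j then 0 else z S $ i)"
        by (simp add: z_def vec_eq_iff)
      thus ?case using insert.IH coord_step[of "z S" r j] by simp
    qed
  qed
  moreover have "z (UNIV - {k}) = (\<chi> i. if i = k then c $ k else 0)"
    by (simp add: z_def vec_eq_iff)
  ultimately have le: "emeasure lborel (cross_polytope 0 1 \<inter> cross_polytope c r)
      \<le> emeasure lborel (cross_polytope 0 1 \<inter> cross_polytope (\<chi> i. if i = k then c $ k else 0) r)"
    by metis
  show ?thesis unfolding meas_eq
    apply (rule enn2real_mono[OF le])
    using emeasure_bounded_finite[OF cp_bounded] by simp
qed

end
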